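(* Consider a population of $N$ units, $M$ of which have a certain attribute; $n$ units are drawn without replacement and $K$ is the number of drawn units having the attribute, so that $\Pr\{K=k\mid M\}=\binom Mk\binom{N-M}{n-k}/\binom Nn$, $k=0,1,\dots,n$. Let $I_K$ be the support of $K$, and let $\widehat M=\widehat M(k)$ be a function of $k\in I_K$ taking values in $\{m\in\mathbb{Z}:k\le m\le N\}$. Then $$\Pr\{K\le k\mid M\}\le\frac{\binom Mk\binom{N-M}{n-k}}{\binom{\widehat M}{k}\binom{N-\widehat M}{n-k}}\quad\text{for } k\in I_K\text{ such that }\widehat M(k)\le M,$$ $$\Pr\{K\ge k\mid M\}\le\frac{\binom Mk\binom{N-M}{n-k}}{\binom{\widehat M}{k}\binom{N-\widehat M}{n-k}}\quad\text{for } k\in I_K\text{ such that }\widehat M(k)\ge M.$$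
   Context: $\Pr\{\cdot\mid M\}$ denotes probability when the population contains $M$ units with the attribute. *)

theory Defs
  imports Complex_Main "HOL-Library.Extended_Nonnegative_Real"
begin

definition hyp_pmf :: "nat \<Rightarrow> nat \<Rightarrow> nat \<Rightarrow> nat \<Rightarrow> real" where
  "hyp_pmf N M n k =
     (if k \<le> n then real (M choose k) * real ((N - M) choose (n - k)) / real (N choose n) else 0)"

definition hyp_cdf :: "nat \<Rightarrow> nat \<Rightarrow> nat \<Rightarrow> nat \<Rightarrow> real" where
  "hyp_cdf N M n k = (\<Sum>j\<in>{0..k}. hyp_pmf N M n j)"

definition hyp_ccdf :: "nat \<Rightarrow> nat \<Rightarrow> nat \<Rightarrow> nat \<Rightarrow> real" where
  "hyp_ccdf N M n k = (\<Sum>j\<in>{k..n}. hyp_pmf N M n j)"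

definition hyp_support :: "nat \<Rightarrow> nat \<Rightarrow> nat \<Rightarrow> nat set" where
  "hyp_support N M n = {k. hyp_pmf N M n k > 0}"

text \<open>The likelihood ratio bound, as an extended nonnegative real
  (a positive number divided by 0 is \<infinity>).\<close>
definition lr_bound :: "nat \<Rightarrow> nat \<Rightarrow> nat \<Rightarrow> nat \<Rightarrow> nat \<Rightarrow> ennreal" where
  "lr_bound N M n k Mh =
     ennreal (real (M choose k) * real ((N - M) choose (n - k)))
     / ennreal (real (Mh choose k) * real ((N - Mh) choose (n - k)))"

end

theory Submission
  imports Defs
begin

lemma choose_absorb: "(x choose Suc k) * Suc k = (x - k) * (x choose k)"
proof (cases x)
  case 0 then show ?thesis by simp
next
  case (Suc m)
  then show ?thesis using Suc_times_binomial_eq[of m k] binomial_absorb_comp[of "Suc m" k]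
    by (metis mult.commute diff_Suc_1)
qed

lemma choose_cross:
  fixes a b j k :: nat
  assumes "a \<le> b" "j \<le> k"
  shows "(b choose j) * (a choose k) \<le> (b choose k) * (a choose j)"
  using assms(2)
proof (induction k rule: dec_induct)
  case base then show ?case by (simp add: mult.commute)
next
  case (step k)
  have "(b choose j) * (a choose Suc k) * Suc k = (b choose j) * (a choose k) * (a - k)"
    by (simp only: mult.assoc choose_absorb) (simp add: ac_simps)
  also have "\<dots> \<le> (b choose k) * (a choose j) * (a - k)"
    using step.IH by simp
  also have "\<dots> \<le> (b choose k) * (a choose j) * (b - k)"
    using assms(1) by (intro mult_le_mono2) simp
  also have "\<dots> = (b choose Suc k) * (a choose j) * Suc k"
    proof -
    have "(b choose k) * (a choose j) * (b - k) = (a choose j) * ((b - k) * (b choose k))"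
      by (simp add: ac_simps)
    also have "\<dots> = (a choose j) * ((b choose Suc k) * Suc k)" by (simp only: choose_absorb)
    finally show ?thesis by (metis mult.assoc mult.commute)
  qed
  finally show ?case by (subst (asm) mult_le_cancel2) simp
qed

definition ff :: "nat \<Rightarrow> nat \<Rightarrow> nat \<Rightarrow> nat \<Rightarrow> nat" where
  "ff N M n j = (M choose j) * ((N - M) choose (n - j))"

lemma ff_cross:
  assumes "a \<le> b" "j \<le> k"
  shows "ff N b n j * ff N a n k \<le> ff N b n k * ff N a n j"
proof -
  have 1: "(b choose j) * (a choose k) \<le> (b choose k) * (a choose j)"
    using choose_cross assms by blast
  have 2: "((N - a) choose (n - k)) * ((N - b) choose (n - j))
      \<le> ((N - a) choose (n - j)) * ((N - b) choose (n - k))"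
    using choose_cross[of "N - b" "N - a" "n - k" "n - j"] assms by simp
  have "ff N b n j * ff N a n k = ((b choose j) * (a choose k)) *
      (((N - a) choose (n - k)) * ((N - b) choose (n - j)))"
    unfolding ff_def by (simp add: ac_simps)
  also have "\<dots> \<le> ((b choose k) * (a choose j)) *
      (((N - a) choose (n - j)) * ((N - b) choose (n - k)))"
    using 1 2 by (rule mult_le_mono)
  also have "\<dots> = ff N b n k * ff N a n j"
    unfolding ff_def by (simp add: ac_simps)
  finally show ?thesis .
qed

lemma ff_sum:
  assumes "Mh \<le> N" "S \<subseteq> {0..n}"
  shows "(\<Sum>j\<in>S. ff N Mh n j) \<le> N choose n"
proof -
  have "(\<Sum>j\<in>S. ff N Mh n j) \<le> (\<Sum>j\<in>{0..n}. ff N Mh n j)"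
    using assms(2) by (intro sum_mono2) auto
  also have "\<dots> = (\<Sum>j\<le>n. (Mh choose j) * ((N - Mh) choose (n - j)))"
    unfolding ff_def by (simp add: atLeast0AtMost)
  also have "\<dots> = N choose n" using vandermonde[of Mh "N - Mh" n] assms(1) by simp
  finally show ?thesis .
qed

lemma main_bound:
  fixes S :: "nat set" and f g :: "nat \<Rightarrow> nat" and c :: nat
  assumes "finite S" "k \<in> S" "c > 0" "f k > 0"
    and cross: "\<And>j. j \<in> S \<Longrightarrow> f j * g k \<le> f k * g j"
    and sumg: "(\<Sum>j\<in>S. g j) \<le> c"
  shows "ennreal (\<Sum>j\<in>S. real (f j) / real c) \<le> ennreal (real (f k)) / ennreal (real (g k))"
proof (cases "g k = 0")
  case True
  then show ?thesis using assms(4) by simp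
next
  case False
  have "(\<Sum>j\<in>S. f j) * g k = (\<Sum>j\<in>S. f j * g k)" by (simp add: sum_distrib_right)
  also have "\<dots> \<le> (\<Sum>j\<in>S. f k * g j)" using cross by (intro sum_mono) auto
  also have "\<dots> = f k * (\<Sum>j\<in>S. g j)" by (simp add: sum_distrib_left)
  also have "\<dots> \<le> f k * c" using sumg by simp
  finally have ineq: "real (\<Sum>j\<in>S. f j) * real (g k) \<le> real (f k) * real c"
    by (metis of_nat_le_iff of_nat_mult)
  have "(\<Sum>j\<in>S. real (f j) / real c) = real (\<Sum>j\<in>S. f j) / real c"
    by (simp add: sum_divide_distrib)
  also have "\<dots> \<le> real (f k) / real (g k)"
    using ineq False assms(3) by (simp add: divide_simps mult.commute)
  finally have r: "(\<Sum>j\<in>S. real (f j) / real c) \<le> real (f k) / real (g k)" .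
  have "ennreal (real (f k)) / ennreal (real (g k)) = ennreal (real (f k) / real (g k))"
    using False by (intro divide_ennreal) auto
  then show ?thesis using r by (simp add: ennreal_leI)
qed

theorem corollary5:
  fixes N M n :: nat and Mhat :: "nat \<Rightarrow> nat"
  assumes "M \<le> N" and "n \<le> N"
    and "\<And>k. k \<in> hyp_support N M n \<Longrightarrow> k \<le> Mhat k \<and> Mhat k \<le> N"
  shows "(\<forall>k \<in> hyp_support N M n. Mhat k \<le> M \<longrightarrow>
           ennreal (hyp_cdf N M n k) \<le> lr_bound N M n k (Mhat k))
       \<and> (\<forall>k \<in> hyp_support N M n. Mhat k \<ge> M \<longrightarrow>
           ennreal (hyp_ccdf N M n k) \<le> lr_bound N M n k (Mhat k))"
proof -
  have c: "N choose n > 0" using assms(2) by simp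
  have supp: "k \<le> n \<and> ff N M n k > 0" if "k \<in> hyp_support N M n" for k
  proof -
    have "hyp_pmf N M n k > 0" using that by (simp add: hyp_support_def)
    then have "k \<le> n" "real (M choose k) * real ((N - M) choose (n - k)) > 0"
      unfolding hyp_pmf_def by (auto split: if_splits simp: zero_less_divide_iff)
    then show ?thesis unfolding ff_def by (metis of_nat_0_less_iff of_nat_mult)
  qed
  have pmf: "hyp_pmf N M n j = real (ff N M n j) / real (N choose n)" if "j \<le> n" for j
    using that by (simp add: hyp_pmf_def ff_def)
  have lr: "lr_bound N M n k Mh = ennreal (real (ff N M n k)) / ennreal (real (ff N Mh n k))" for k Mh
    by (simp add: lr_bound_def ff_def)
  show ?thesis
  proof (intro conjI ballI impI)
    fix k assume k: "k \<in> hyp_support N M n" and le: "Mhat k \<le> M"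
    have kn: "k \<le> n" and fk: "ff N M n k > 0" using supp[OF k] by auto
    have "hyp_cdf N M n k = (\<Sum>j\<in>{0..k}. real (ff N M n j) / real (N choose n))"
      unfolding hyp_cdf_def by (intro sum.cong refl) (use kn in \<open>auto simp: pmf\<close>)
    moreover have "ennreal (\<Sum>j\<in>{0..k}. real (ff N M n j) / real (N choose n))
        \<le> ennreal (real (ff N M n k)) / ennreal (real (ff N (Mhat k) n k))"
    proof (rule main_bound[where f="ff N M n" and g="ff N (Mhat k) n" and k=k and c="N choose n"])
      show "ff N M n j * ff N (Mhat k) n k \<le> ff N M n k * ff N (Mhat k) n j"
        if "j \<in> {0..k}" for j
        using le that ff_cross[of "Mhat k" M j k N n] by auto
      show "(\<Sum>j\<in>{0..k}. ff N (Mhat k) n j) \<le> N choose n"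
        using ff_sum assms(3)[OF k] kn by auto
    qed (use c fk in auto)
    ultimately show "ennreal (hyp_cdf N M n k) \<le> lr_bound N M n k (Mhat k)"
      by (simp add: lr)
  next
    fix k assume k: "k \<in> hyp_support N M n" and le: "M \<le> Mhat k"
    have kn: "k \<le> n" and fk: "ff N M n k > 0" using supp[OF k] by auto
    have "hyp_ccdf N M n k = (\<Sum>j\<in>{k..n}. real (ff N M n j) / real (N choose n))"
      unfolding hyp_ccdf_def by (intro sum.cong) (auto simp: pmf)
    moreover have "ennreal (\<Sum>j\<in>{k..n}. real (ff N M n j) / real (N choose n))
        \<le> ennreal (real (ff N M n k)) / ennreal (real (ff N (Mhat k) n k))"
    proof (rule main_bound[where f="ff N M n" and g="ff N (Mhat k) n" and k=k and c="N choose n"])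
      show "ff N M n j * ff N (Mhat k) n k \<le> ff N M n k * ff N (Mhat k) n j"
        if "j \<in> {k..n}" for j
        using ff_cross[of M "Mhat k" k j N n] le that by (simp add: mult.commute)
      show "(\<Sum>j\<in>{k..n}. ff N (Mhat k) n j) \<le> N choose n"
        using ff_sum assms(3)[OF k] by auto
    qed (use c fk kn in auto)
    ultimately show "ennreal (hyp_ccdf N M n k) \<le> lr_bound N M n k (Mhat k)"
      by (simp add: lr)
  qed
qed

end
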